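(* Let $H$ be a real Hilbert space, $A:H\to2^H$ maximal monotone with $\mathrm{zer}A\ne\emptyset$, $(\gamma_n)$ a sequence in $(0,\infty)$ with $\sum_n\gamma_n^2=\infty$ and rate of divergence $\theta$, $x_0\in H$, $x_{n+1}=J_{\gamma_nA}x_n$, and $b>0$ with $b\ge\|x_0-p\|$ for some $p\in\mathrm{zer}A$. For $k\in\mathbb{N}$ let $m_k=\max_{0\le i\le k}\gamma_i$ and $M_k=\lceil(k+1)(2+m_k)\rceil-1$. Then for every $k\in\mathbb{N}$ there exists $N\le\Phi(k,m_k,\theta,b):=\theta\big(\lceil b^2(M_k+1)^2\rceil\big)\lceil b^2(M_k+1)^2\rceil-1$ such that $\|x_N-J_{\gamma_iA}x_N\|\le\frac1{k+1}$ for all $i\le k$ (i.e. $x_N\in AF_k$).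
   Context: $J_{\gamma A}:=(Id+\gamma A)^{-1}$ is the resolvent of $\gamma A$. $AF_k:=\bigcap_{i\le k}\{x\in H\mid\|x-J_{\gamma_iA}x\|\le\frac1{k+1}\}$. A rate of divergence for $\sum\gamma_n^2$ is $\theta:\mathbb{N}\to\mathbb{N}$ with $\sum_{i=0}^{\theta(n)}\gamma_i^2\ge n$ for all $n$. *)

theory Defs
  imports "HOL-Analysis.Analysis"
begin

definition monotone_op :: "('a::real_inner \<Rightarrow> 'a set) \<Rightarrow> bool" where
  "monotone_op A \<longleftrightarrow>
     (\<forall>x y u v. u \<in> A x \<longrightarrow> v \<in> A y \<longrightarrow> 0 \<le> inner (x - y) (u - v))"

definition maximal_monotone :: "('a::real_inner \<Rightarrow> 'a set) \<Rightarrow> bool" where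
  "maximal_monotone A \<longleftrightarrow> monotone_op A \<and>
     (\<forall>B. monotone_op B \<longrightarrow> (\<forall>x. A x \<subseteq> B x) \<longrightarrow> B = A)"

definition zer :: "('a::real_vector \<Rightarrow> 'a set) \<Rightarrow> 'a set" where
  "zer A = {x. 0 \<in> A x}"

text \<open>Resolvent J_{gamma A} = (Id + gamma A)^{-1}: J x is the y with x \<in> y + gamma A y.\<close>
definition resolvent :: "real \<Rightarrow> ('a::real_vector \<Rightarrow> 'a set) \<Rightarrow> 'a \<Rightarrow> 'a" where
  "resolvent \<gamma> A x = (THE y. \<exists>u \<in> A y. x = y + \<gamma> *\<^sub>R u)"

definition AF :: "(nat \<Rightarrow> real) \<Rightarrow> ('a::real_normed_vector \<Rightarrow> 'a set) \<Rightarrow> nat \<Rightarrow> 'a set" where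
  "AF \<gamma> A k = (\<Inter>i\<in>{..k}. {x. norm (x - resolvent (\<gamma> i) A x) \<le> 1 / (real k + 1)})"

definition rate_of_divergence :: "(nat \<Rightarrow> real) \<Rightarrow> (nat \<Rightarrow> nat) \<Rightarrow> bool" where
  "rate_of_divergence \<gamma> \<theta> \<longleftrightarrow> (\<forall>n. (\<Sum>i\<le>\<theta> n. (\<gamma> i)\<^sup>2) \<ge> real n)"

definition m_seq :: "(nat \<Rightarrow> real) \<Rightarrow> nat \<Rightarrow> real" where
  "m_seq \<gamma> k = Max (\<gamma> ` {..k})"

definition M_seq :: "real \<Rightarrow> nat \<Rightarrow> nat" where
  "M_seq m k = nat (\<lceil>(real k + 1) * (2 + m)\<rceil>) - 1"

definition Phi :: "nat \<Rightarrow> real \<Rightarrow> (nat \<Rightarrow> nat) \<Rightarrow> real \<Rightarrow> nat" where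
  "Phi k m \<theta> b = (let c = nat \<lceil>b\<^sup>2 * (real (M_seq m k) + 1)\<^sup>2\<rceil> in \<theta> c * c - 1)"

end

theory Submission
  imports Defs
begin


lemma weighted_mono:
  fixes a v :: "'i \<Rightarrow> 'a::real_inner"
  assumes fin: "finite I" and u0: "\<forall>i\<in>I. 0 \<le> u i" and u1: "sum u I = 1"
    and mono: "\<forall>i\<in>I. \<forall>j\<in>I. 0 \<le> inner (a i - a j) (v i - v j)"
  shows "inner (\<Sum>i\<in>I. u i *\<^sub>R a i) (\<Sum>i\<in>I. u i *\<^sub>R v i) \<le> (\<Sum>i\<in>I. u i * inner (a i) (v i))"
proof -
  have "0 \<le> (\<Sum>i\<in>I. \<Sum>j\<in>I. u i * u j * inner (a i - a j) (v i - v j))"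
    using u0 mono by (intro sum_nonneg mult_nonneg_nonneg) auto
  also have "\<dots> = (\<Sum>i\<in>I. \<Sum>j\<in>I. u i * u j * inner (a i) (v i) + u i * u j * inner (a j) (v j)
       - u i * u j * inner (a i) (v j) - u i * u j * inner (a j) (v i))"
    by (simp add: inner_diff_left inner_diff_right algebra_simps)
  also have "\<dots> = 2 * (\<Sum>i\<in>I. u i * inner (a i) (v i)) - 2 * inner (\<Sum>i\<in>I. u i *\<^sub>R a i) (\<Sum>i\<in>I. u i *\<^sub>R v i)"
  proof -
    have e1: "(\<Sum>i\<in>I. \<Sum>j\<in>I. u i * u j * inner (a i) (v i)) = (\<Sum>i\<in>I. u i * inner (a i) (v i))"
      by (simp add: sum_distrib_left[symmetric] sum_distrib_right[symmetric] u1 mult.commute mult.left_commute)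
    have e2: "(\<Sum>i\<in>I. \<Sum>j\<in>I. u i * u j * inner (a j) (v j)) = (\<Sum>i\<in>I. u i * inner (a i) (v i))"
      by (simp add: sum_distrib_left[symmetric] sum_distrib_right[symmetric] u1 mult.assoc)
    have e3: "(\<Sum>i\<in>I. \<Sum>j\<in>I. u i * u j * inner (a i) (v j)) = inner (\<Sum>i\<in>I. u i *\<^sub>R a i) (\<Sum>i\<in>I. u i *\<^sub>R v i)"
      apply (subst sum.swap) by (simp add: inner_sum_left inner_sum_right sum_distrib_left algebra_simps)
    have e4: "(\<Sum>i\<in>I. \<Sum>j\<in>I. u i * u j * inner (a j) (v i)) = inner (\<Sum>i\<in>I. u i *\<^sub>R a i) (\<Sum>i\<in>I. u i *\<^sub>R v i)"
      by (simp add: inner_sum_left inner_sum_right sum_distrib_left algebra_simps)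
    show ?thesis
      by (simp add: sum.distrib sum_subtractf e1 e2 e3 e4)
  qed
  finally show ?thesis by simp
qed

lemma small_t:
  fixes D E :: real
  assumes "E \<ge> 0" and h: "\<And>t. 0 < t \<Longrightarrow> t \<le> 1 \<Longrightarrow> 0 \<le> t * D + t\<^sup>2 * E"
  shows "D \<ge> 0"
proof (rule ccontr)
  assume "\<not> D \<ge> 0"
  hence D: "D < 0" by simp
  define t where "t = min 1 (- D / (2 * (E + 1)))"
  have t0: "0 < t" using D assms(1) by (simp add: t_def divide_neg_pos)
  have t1: "t \<le> 1" by (simp add: t_def)
  have "t \<le> - D / (2 * (E + 1))" by (simp add: t_def)
  hence "t * (2 * (E + 1)) \<le> - D" using assms(1) by (simp add: field_simps)
  moreover have "t * E < t * (2 * (E + 1))" using t0 assms(1) by (intro mult_strict_left_mono) auto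
  ultimately have "t * E < - D" by linarith
  hence "D + t * E < 0" by simp
  hence "t * (D + t * E) < 0" using t0 by (simp add: mult_pos_neg)
  moreover have "0 \<le> t * (D + t * E)" using h[OF t0 t1] by (simp add: power2_eq_square algebra_simps)
  ultimately show False by simp
qed


lemma norm_add_t:
  fixes w d :: "'a::real_inner"
  shows "(norm (w + t *\<^sub>R d))\<^sup>2 = (norm w)\<^sup>2 + 2 * t * inner w d + t\<^sup>2 * (norm d)\<^sup>2"
  unfolding power2_norm_eq_inner by (simp add: inner_add_left inner_add_right inner_commute power2_eq_square algebra_simps)

lemma quarter_id:
  fixes A V :: "'a::real_inner"
  shows "(norm (A + V))\<^sup>2 / 4 = (norm (A - V))\<^sup>2 / 4 + inner A V"
  unfolding power2_norm_eq_inner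
  by (simp add: inner_add_left inner_add_right inner_diff_left inner_diff_right inner_commute field_simps)

lemma finite_DF:
  fixes F :: "('a::real_inner \<times> 'a) set"
  assumes fin: "finite F" and mono: "\<forall>p\<in>F. \<forall>p'\<in>F. 0 \<le> inner (fst p - fst p') (snd p - snd p')"
  shows "\<exists>y. \<forall>p\<in>F. inner (y - fst p) (y + snd p) \<le> 0"
proof (cases "F = {}")
  case True then show ?thesis by simp
next
  case False
  define g where "g = (\<lambda>p::'a\<times>'a. (fst p, snd p, inner (fst p) (snd p)))"
  define T where "T = g ` F"
  define K where "K = convex hull T"
  define q where "q = (\<lambda>z::'a\<times>'a\<times>real. (norm (fst z - fst (snd z)))\<^sup>2 / 4 + snd (snd z))"
  have finT: "finite T" using fin by (simp add: T_def)
  have "compact K" unfolding K_def using finT by (rule finite_imp_compact_convex_hull)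
  moreover have "K \<noteq> {}" using False by (simp add: K_def T_def)
  moreover have "continuous_on K q" unfolding q_def by (intro continuous_intros) auto
  ultimately obtain z where zK: "z \<in> K" and zmin: "\<forall>y\<in>K. q z \<le> q y"
    using continuous_attains_inf by blast
  have hq: "inner (fst z) (fst (snd z)) \<le> snd (snd z)"
  proof -
    obtain u where u0: "\<forall>x\<in>T. 0 \<le> u x" and u1: "sum u T = 1" and uz: "(\<Sum>x\<in>T. u x *\<^sub>R x) = z"
      using zK unfolding K_def convex_hull_finite[OF finT] by blast
    have f1: "fst z = (\<Sum>x\<in>T. u x *\<^sub>R fst x)" using uz[symmetric] by (simp add: fst_sum)
    have f2: "fst (snd z) = (\<Sum>x\<in>T. u x *\<^sub>R fst (snd x))" using uz[symmetric] by (simp add: snd_sum fst_sum)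
    have f3: "snd (snd z) = (\<Sum>x\<in>T. u x * inner (fst x) (fst (snd x)))"
    proof -
      have "(\<Sum>x\<in>T. u x * snd (snd x)) = (\<Sum>x\<in>T. u x * inner (fst x) (fst (snd x)))"
        by (rule sum.cong) (auto simp: T_def g_def)
      then show ?thesis using uz[symmetric] by (simp add: snd_sum)
    qed
    have mT: "\<forall>i\<in>T. \<forall>j\<in>T. 0 \<le> inner (fst i - fst j) (fst (snd i) - fst (snd j))"
      using mono by (auto simp: T_def g_def)
    show ?thesis unfolding f1 f2 f3
      by (rule weighted_mono[OF finT u0 u1 mT])
  qed
  define w where "w = fst z - fst (snd z)"
  define s where "s = snd (snd z)"
  define y where "y = (1/2::real) *\<^sub>R w"
  have qz: "q z = (norm w)\<^sup>2 / 4 + s" by (simp add: q_def w_def s_def)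
  have qpos: "0 \<le> (norm w)\<^sup>2 / 4 + s"
  proof -
    have "0 \<le> (norm (fst z + fst (snd z)))\<^sup>2 / 4" by simp
    also have "\<dots> = (norm w)\<^sup>2 / 4 + inner (fst z) (fst (snd z))"
      unfolding w_def by (rule quarter_id)
    finally show ?thesis using hq s_def by simp
  qed
  show ?thesis
  proof (intro exI ballI)
    fix p assume pF: "p \<in> F"
    define a where "a = fst p"
    define v where "v = snd p"
    define pp where "pp = a - v"
    define \<beta> where "\<beta> = inner a v"
    have PK: "g p \<in> K" unfolding K_def T_def using pF by (intro hull_inc) simp
    define D where "D = inner w (pp - w) / 2 + \<beta> - s"
    define E where "E = (norm (pp - w))\<^sup>2 / 4"
    have "D \<ge> 0"
    proof (rule small_t)
      show "0 \<le> E" by (simp add: E_def)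
      fix t :: real assume t0: "0 < t" and t1: "t \<le> 1"
      have "(1 - t) *\<^sub>R z + t *\<^sub>R g p \<in> K"
        using zK PK t0 t1 unfolding K_def by (intro convexD convex_convex_hull) auto
      hence le: "q z \<le> q ((1 - t) *\<^sub>R z + t *\<^sub>R g p)" using zmin by blast
      have "q ((1 - t) *\<^sub>R z + t *\<^sub>R g p) = (norm (w + t *\<^sub>R (pp - w)))\<^sup>2 / 4 + s + t * (\<beta> - s)"
      proof -
        have "fst ((1 - t) *\<^sub>R z + t *\<^sub>R g p) - fst (snd ((1 - t) *\<^sub>R z + t *\<^sub>R g p)) = w + t *\<^sub>R (pp - w)"
          by (simp add: g_def w_def pp_def a_def v_def algebra_simps)
        moreover have "snd (snd ((1 - t) *\<^sub>R z + t *\<^sub>R g p)) = s + t * (\<beta> - s)"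
          by (simp add: g_def s_def \<beta>_def a_def v_def algebra_simps)
        ultimately show ?thesis by (simp add: q_def)
      qed
      also have "\<dots> = q z + t * D + t\<^sup>2 * E"
        unfolding norm_add_t qz D_def E_def by (simp add: field_simps power2_eq_square)
      finally show "0 \<le> t * D + t\<^sup>2 * E" using le by simp
    qed
    have "inner (y - a) (y + v) = (norm w)\<^sup>2 / 4 - inner w pp / 2 - \<beta>"
      by (simp add: y_def pp_def \<beta>_def power2_norm_eq_inner inner_add_left inner_add_right inner_diff_left inner_diff_right inner_commute field_simps)
    also have "\<dots> \<le> - ((norm w)\<^sup>2 / 4 + s)"
      using \<open>D \<ge> 0\<close> by (simp add: D_def inner_diff_right power2_norm_eq_inner field_simps)
    also have "\<dots> \<le> 0" using qpos by simp
    finally show "inner (y - fst p) (y + snd p) \<le> 0" by (simp add: a_def v_def)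
  qed
qed


lemma par_arith:
  fixes r e D n1 n2 N :: real
  assumes r0: "0 \<le> r" and e0: "0 < e" and e1: "e \<le> 1" and D0: "0 \<le> D" and rD: "r - e < D"
    and "0 \<le> n1" "n1 \<le> r + e" "0 \<le> n2" "n2 \<le> r + e" and DN: "2*D \<le> N"
  shows "2*n1\<^sup>2 + 2*n2\<^sup>2 - N\<^sup>2 \<le> 16*(r+1)*e"
proof -
  have a: "n1\<^sup>2 \<le> (r+e)\<^sup>2" "n2\<^sup>2 \<le> (r+e)\<^sup>2" using assms by (auto intro: power_mono)
  have b: "(2*D)\<^sup>2 \<le> N\<^sup>2" using DN D0 by (intro power_mono) auto
  have c: "4*(r+e)\<^sup>2 - 4*D\<^sup>2 \<le> 16*(r+1)*e"
  proof (cases "e \<le> r")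
    case True
    hence "(r-e)\<^sup>2 \<le> D\<^sup>2" using rD by (intro power_mono) auto
    moreover have "4*(r+e)\<^sup>2 - 4*(r-e)\<^sup>2 = 16*r*e" by (simp add: power2_eq_square algebra_simps)
    ultimately show ?thesis using e0 by (simp add: algebra_simps)
  next
    case False
    hence "(r+e)\<^sup>2 \<le> (2*e)\<^sup>2" using r0 by (intro power_mono) auto
    moreover have "(2*e)\<^sup>2 \<le> 4*e" using e0 e1 by (simp add: power2_eq_square mult_le_cancel_left1)
    moreover have "0 \<le> D\<^sup>2" by simp
    moreover have "16*e \<le> 16*(r+1)*e" using r0 e0 by simp
    ultimately show ?thesis by linarith
  qed
  show ?thesis using a b c by (simp add: power2_eq_square)
qed

lemma psi_mid:
  fixes y1 y2 a v :: "'a::real_inner"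
  shows "inner ((1/2) *\<^sub>R (y1 + y2) - a) ((1/2) *\<^sub>R (y1 + y2) + v) \<le>
     (inner (y1 - a) (y1 + v) + inner (y2 - a) (y2 + v)) / 2"
proof -
  have "inner ((1/2) *\<^sub>R (y1 + y2) - a) ((1/2) *\<^sub>R (y1 + y2) + v) =
     (inner (y1 - a) (y1 + v) + inner (y2 - a) (y2 + v)) / 2 - inner (y1 - y2) (y1 - y2) / 4"
    by (simp add: inner_add_left inner_add_right inner_diff_left inner_diff_right inner_commute field_simps)
  moreover have "0 \<le> inner (y1 - y2) (y1 - y2)" by simp
  ultimately show ?thesis by linarith
qed

lemma psi_bound:
  fixes y a v :: "'a::real_inner"
  assumes "inner (y - a) (y + v) \<le> 0"
  shows "norm y \<le> 2 * (norm a + norm v)"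
proof (rule ccontr)
  define t where "t = norm y"
  define R where "R = norm a + norm v"
  assume "\<not> norm y \<le> 2 * (norm a + norm v)"
  hence tR: "2 * R < t" by (simp add: t_def R_def)
  have R0: "0 \<le> R" by (simp add: R_def)
  have "t\<^sup>2 = inner (y - a) (y + v) + inner a y - inner y v + inner a v"
    by (simp add: t_def power2_norm_eq_inner inner_add_left inner_add_right inner_diff_left inner_diff_right inner_commute)
  also have "\<dots> \<le> norm a * t + t * norm v + norm a * norm v"
    using assms Cauchy_Schwarz_ineq2[of a y] Cauchy_Schwarz_ineq2[of y v] Cauchy_Schwarz_ineq2[of a v]
    by (simp add: t_def abs_le_iff)
  also have "\<dots> \<le> t * R + R * R"
  proof -
    have "norm a * norm v \<le> R * R" unfolding R_def by (simp add: algebra_simps)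
    thus ?thesis by (simp add: R_def algebra_simps)
  qed
  finally have "t\<^sup>2 \<le> t * R + R * R" .
  moreover have "R * R \<le> t * R" using tR R0 by (intro mult_right_mono) auto
  moreover have "2 * R * t < t * t" using tR R0 by (intro mult_strict_right_mono) auto
  moreover have "2 * R * t = 2 * (t * R)" by simp
  ultimately show False by (simp add: power2_eq_square)
qed

lemma parallelogram:
  fixes x y :: "'a::real_inner"
  shows "(norm (x - y))\<^sup>2 = 2 * (norm x)\<^sup>2 + 2 * (norm y)\<^sup>2 - (norm (x + y))\<^sup>2"
  unfolding power2_norm_eq_inner
  by (simp add: inner_add_left inner_add_right inner_diff_left inner_diff_right inner_commute)



lemma DF:
  fixes G :: "('a::{real_inner,complete_space} \<times> 'a) set"
  assumes mono: "\<forall>p\<in>G. \<forall>p'\<in>G. 0 \<le> inner (fst p - fst p') (snd p - snd p')"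
  shows "\<exists>y. \<forall>p\<in>G. inner (y - fst p) (y + snd p) \<le> 0"
proof (cases "G = {}")
  case True thus ?thesis by simp
next
  case False
  then obtain g0 where g0: "g0 \<in> G" by blast
  define S :: "('a \<times> 'a) set \<Rightarrow> 'a set" where "S = (\<lambda>F. {y. \<forall>p\<in>F. inner (y - fst p) (y + snd p) \<le> 0})"
  define \<delta> :: "('a \<times> 'a) set \<Rightarrow> real" where "\<delta> = (\<lambda>F. Inf (norm ` S F))"
  define FF :: "('a \<times> 'a) set set" where "FF = {F. finite F \<and> F \<subseteq> G}"
  define R where "R = 2 * (norm (fst g0) + norm (snd g0))"
  have ne: "S F \<noteq> {}" if "F \<in> FF" for F
  proof -
    have "finite F" and "\<forall>p\<in>F. \<forall>p'\<in>F. 0 \<le> inner (fst p - fst p') (snd p - snd p')"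
      using that mono by (auto simp: FF_def)
    from finite_DF[OF this] show ?thesis by (auto simp: S_def)
  qed
  have bb: "bdd_below (norm ` S F)" for F by (rule bdd_belowI[of _ 0]) auto
  have lb: "\<delta> F \<le> norm y" if "y \<in> S F" for F y unfolding \<delta>_def using that bb by (intro cInf_lower) auto
  have nn: "0 \<le> \<delta> F" if "F \<in> FF" for F unfolding \<delta>_def using ne[OF that] by (intro cInf_greatest) auto
  have approx: "\<exists>y\<in>S F. norm y < \<delta> F + e" if "F \<in> FF" "0 < e" for F e
  proof -
    have "Inf (norm ` S F) < \<delta> F + e" using that(2) by (simp add: \<delta>_def)
    then have "\<exists>n\<in>norm ` S F. n < \<delta> F + e"
      using cInf_less_iff[of "norm ` S F", OF _ bb] ne[OF that(1)] by blast
    thus ?thesis by auto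
  qed
  have Santi: "S F' \<subseteq> S F" if "F \<subseteq> F'" for F F' using that by (auto simp: S_def)
  have anti: "\<delta> F \<le> \<delta> F'" if "F \<subseteq> F'" "F' \<in> FF" for F F'
  proof -
    have "\<delta> F \<le> Inf (norm ` S F')" using ne[OF that(2)] lb Santi[OF that(1)] by (intro cInf_greatest) auto
    thus ?thesis by (simp add: \<delta>_def)
  qed
  have mid: "(1/2) *\<^sub>R (y1 + y2) \<in> S F" if "y1 \<in> S F" "y2 \<in> S F" for F y1 y2
  proof -
    { fix p assume "p \<in> F"
      then have "inner (y1 - fst p) (y1 + snd p) \<le> 0" "inner (y2 - fst p) (y2 + snd p) \<le> 0"
        using that by (auto simp: S_def)
      then have "inner ((1/2) *\<^sub>R (y1 + y2) - fst p) ((1/2) *\<^sub>R (y1 + y2) + snd p) \<le> 0"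
        by (intro order_trans[OF psi_mid]) simp }
    thus ?thesis by (auto simp: S_def)
  qed
  have up: "\<delta> F \<le> R" if "F \<in> FF" for F
  proof -
    have "insert g0 F \<in> FF" using that g0 by (auto simp: FF_def)
    then obtain y where y: "y \<in> S (insert g0 F)" using ne by blast
    have "\<delta> F \<le> norm y" using lb y Santi[of F "insert g0 F"] by blast
    also have "norm y \<le> R" using y psi_bound[of y "fst g0" "snd g0"] by (auto simp: S_def R_def)
    finally show ?thesis .
  qed
  have emptyFF: "{} \<in> FF" by (simp add: FF_def)
  have FFne: "\<delta> ` FF \<noteq> {}" using emptyFF by blast
  have bdd: "bdd_above (\<delta> ` FF)" using up by (auto intro: bdd_aboveI[of _ R])
  define r where "r = Sup (\<delta> ` FF)"
  have le_r: "\<delta> F \<le> r" if "F \<in> FF" for F unfolding r_def using bdd that by (intro cSup_upper) auto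
  have r0: "0 \<le> r" using le_r[OF emptyFF] nn[OF emptyFF] by linarith
  define e where "e = (\<lambda>n::nat. inverse (real (Suc n)))"
  have e0: "0 < e n" "e n \<le> 1" for n by (auto simp: e_def inverse_le_1_iff)
  have emono: "e m \<le> e n" if "n \<le> m" for m n using that by (simp add: e_def le_imp_inverse_le)
  have "\<exists>F\<in>FF. r - e n < \<delta> F" for n
  proof -
    have "r - e n < Sup (\<delta> ` FF)" using e0(1)[of n] by (simp add: r_def)
    from less_cSupD[OF FFne this] show ?thesis by auto
  qed
  then obtain Fs where Fs: "\<forall>n. Fs n \<in> FF \<and> r - e n < \<delta> (Fs n)" by metis
  define Gs where "Gs = (\<lambda>n. \<Union>j\<le>n. Fs j)"
  have GsFF: "Gs n \<in> FF" for n using Fs by (auto simp: Gs_def FF_def)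
  have Gsmono: "Gs n \<subseteq> Gs m" if "n \<le> m" for n m using that unfolding Gs_def by (intro UN_mono) auto
  have Gsd: "r - e n < \<delta> (Gs n)" for n
  proof -
    have "Fs n \<subseteq> Gs n" by (auto simp: Gs_def)
    then show ?thesis using Fs anti[OF _ GsFF[of n]] by (meson order_less_le_trans)
  qed
  have par: "(norm (y1 - y2))\<^sup>2 \<le> 16*(r+1)*e n"
    if "y1 \<in> S (Gs n)" "y2 \<in> S (Gs n)" "norm y1 \<le> r + e n" "norm y2 \<le> r + e n" for n y1 y2
  proof -
    have "\<delta> (Gs n) \<le> norm ((1/2) *\<^sub>R (y1 + y2))" using mid[OF that(1,2)] lb by blast
    hence "2 * \<delta> (Gs n) \<le> norm (y1 + y2)" by simp
    then show ?thesis unfolding parallelogram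
      using par_arith[OF r0 e0(1) e0(2) nn[OF GsFF] Gsd] that by simp
  qed
  obtain xs where xs: "\<forall>n. xs n \<in> S (Gs n) \<and> norm (xs n) < \<delta> (Gs n) + e n"
  proof -
    have "\<forall>n. \<exists>y. y \<in> S (Gs n) \<and> norm y < \<delta> (Gs n) + e n" using approx[OF GsFF e0(1)] by blast
    then show ?thesis using that by metis
  qed
  have xsb: "norm (xs m) \<le> r + e n" "xs m \<in> S (Gs n)" if "n \<le> m" for n m
  proof -
    have "norm (xs m) < \<delta> (Gs m) + e m" using xs by blast
    moreover have "\<delta> (Gs m) \<le> r" using le_r GsFF by blast
    ultimately show "norm (xs m) \<le> r + e n" using emono[OF that] by linarith
    show "xs m \<in> S (Gs n)" using xs Santi[OF Gsmono[OF that]] by blast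
  qed
  have cau: "(norm (xs n - xs m))\<^sup>2 \<le> 16*(r+1)*e n" if "n \<le> m" for n m
    using par[OF _ xsb(2)[OF that] _ xsb(1)[OF that]] xsb[OF order_refl] by blast
  have "Cauchy xs"
  proof (rule CauchyI)
    fix \<epsilon>::real assume \<epsilon>: "0 < \<epsilon>"
    have "0 < \<epsilon>\<^sup>2 / (16*(r+1))" using \<epsilon> r0 by simp
    then obtain N where N0: "N \<noteq> 0" and Ne: "inverse (real N) < \<epsilon>\<^sup>2 / (16*(r+1))"
      using real_arch_inverse by blast
    have "e N \<le> inverse (real N)" using N0 by (simp add: e_def le_imp_inverse_le)
    hence "16*(r+1)*e N \<le> 16*(r+1)*inverse (real N)" using r0 by (intro mult_left_mono) auto
    moreover have "inverse (real N) * (16*(r+1)) < \<epsilon>\<^sup>2"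
      using Ne r0 by (subst (asm) pos_less_divide_eq) auto
    ultimately have eN: "16*(r+1)*e N < \<epsilon>\<^sup>2" by (simp add: mult.commute)
    have "norm (xs m - xs n) < \<epsilon>" if "m \<ge> N" "n \<ge> N" for m n
    proof -
      have "(norm (xs m - xs n))\<^sup>2 < \<epsilon>\<^sup>2"
      proof (cases "m \<le> n")
        case True
        have "16*(r+1)*e m \<le> 16*(r+1)*e N" using emono[OF that(1)] r0 by simp
        then show ?thesis using cau[OF True] eN by linarith
      next
        case False
        have "16*(r+1)*e n \<le> 16*(r+1)*e N" using emono[OF that(2)] r0 by simp
        then show ?thesis using cau[of n m] False eN by (simp add: norm_minus_commute)
      qed
      then show ?thesis using \<epsilon> by (simp add: power_less_imp_less_base)
    qed
    then show "\<exists>M. \<forall>m\<ge>M. \<forall>n\<ge>M. norm (xs m - xs n) < \<epsilon>" by blast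
  qed
  then obtain L where L: "xs \<longlonglongrightarrow> L" using Cauchy_convergent_iff convergent_def by blast
  show ?thesis
  proof (intro exI ballI)
    fix g assume gG: "g \<in> G"
    have iFF: "insert g (Gs n) \<in> FF" for n using GsFF gG by (auto simp: FF_def)
    obtain zs where zs: "\<forall>n. zs n \<in> S (insert g (Gs n)) \<and> norm (zs n) < \<delta> (insert g (Gs n)) + e n"
    proof -
      have "\<forall>n. \<exists>y. y \<in> S (insert g (Gs n)) \<and> norm y < \<delta> (insert g (Gs n)) + e n" using approx[OF iFF e0(1)] by blast
      then show ?thesis using that by metis
    qed
    have zsG: "zs n \<in> S (Gs n)" for n using zs Santi[of "Gs n" "insert g (Gs n)"] by blast
    have zg: "inner (zs n - fst g) (zs n + snd g) \<le> 0" for n using zs by (auto simp: S_def)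
    have zsb: "norm (zs n) \<le> r + e n" for n using zs le_r[OF iFF[of n]] by (meson less_eq_real_def add_le_cancel_right order_trans)
    have d: "norm (xs n - zs n) \<le> sqrt (16*(r+1)*e n)" for n
    proof -
      have "(norm (xs n - zs n))\<^sup>2 \<le> 16*(r+1)*e n"
        using par[OF _ zsG _ zsb] xsb[OF order_refl] by blast
      thus ?thesis by (simp add: real_le_rsqrt)
    qed
    have "(\<lambda>n. 16*(r+1)*e n) \<longlonglongrightarrow> 0"
      unfolding e_def by (intro tendsto_mult_right_zero LIMSEQ_inverse_real_of_nat)
    hence "(\<lambda>n. sqrt (16*(r+1)*e n)) \<longlonglongrightarrow> 0" using tendsto_real_sqrt by fastforce
    hence "(\<lambda>n. xs n - zs n) \<longlonglongrightarrow> 0"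
      by (rule Lim_null_comparison[rotated]) (intro always_eventually allI d)
    hence "(\<lambda>n. xs n - (xs n - zs n)) \<longlonglongrightarrow> L - 0" using L by (intro tendsto_diff)
    hence zL: "zs \<longlonglongrightarrow> L" by simp
    have "(\<lambda>n. inner (zs n - fst g) (zs n + snd g)) \<longlonglongrightarrow> inner (L - fst g) (L + snd g)"
      using zL by (intro tendsto_intros)
    then show "inner (L - fst g) (L + snd g) \<le> 0" using zg by (intro tendsto_upperbound) auto
  qed
qed



lemma minty:
  fixes A :: "'a::{real_inner,complete_space} \<Rightarrow> 'a set"
  assumes mm: "maximal_monotone A" and g: "\<gamma> > 0"
  shows "\<exists>y. \<exists>u\<in>A y. z = y + \<gamma> *\<^sub>R u"
proof -
  have mon: "monotone_op A" using mm by (simp add: maximal_monotone_def)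
  define G where "G = {(a, \<gamma> *\<^sub>R u - z) | a u. u \<in> A a}"
  have "\<forall>p\<in>G. \<forall>p'\<in>G. 0 \<le> inner (fst p - fst p') (snd p - snd p')"
  proof (intro ballI)
    fix p p' assume "p \<in> G" "p' \<in> G"
    then obtain a u a' u' where p: "p = (a, \<gamma> *\<^sub>R u - z)" "u \<in> A a" and p': "p' = (a', \<gamma> *\<^sub>R u' - z)" "u' \<in> A a'"
      by (auto simp: G_def)
    have "(\<gamma> *\<^sub>R u - z) - (\<gamma> *\<^sub>R u' - z) = \<gamma> *\<^sub>R (u - u')" by (simp add: algebra_simps)
    moreover have "0 \<le> inner (a - a') (u - u')" using mon p p' by (auto simp: monotone_op_def)
    ultimately show "0 \<le> inner (fst p - fst p') (snd p - snd p')" using p p' g by simp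
  qed
  then obtain y where y: "\<forall>p\<in>G. inner (y - fst p) (y + snd p) \<le> 0" using DF by blast
  define w where "w = (1/\<gamma>) *\<^sub>R (z - y)"
  have key: "0 \<le> inner (y - x') (w - u')" if "u' \<in> A x'" for x' u'
  proof -
    have "(x', \<gamma> *\<^sub>R u' - z) \<in> G" using that by (auto simp: G_def)
    hence h: "inner (y - x') (y + (\<gamma> *\<^sub>R u' - z)) \<le> 0" using y by force
    have "w - u' = (- 1/\<gamma>) *\<^sub>R (y + (\<gamma> *\<^sub>R u' - z))" using g by (simp add: w_def algebra_simps)
    hence "inner (y - x') (w - u') = (- 1/\<gamma>) * inner (y - x') (y + (\<gamma> *\<^sub>R u' - z))" by simp
    moreover have "0 \<le> (- 1/\<gamma>) * inner (y - x') (y + (\<gamma> *\<^sub>R u' - z))"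
      using h g by (intro mult_nonpos_nonpos) auto
    ultimately show ?thesis by simp
  qed
  define B where "B = (\<lambda>x. if x = y then insert w (A x) else A x)"
  have "monotone_op B"
    unfolding monotone_op_def
  proof (intro allI impI)
    fix x1 x2 u1 u2 assume h1: "u1 \<in> B x1" and h2: "u2 \<in> B x2"
    consider "u1 \<in> A x1" "u2 \<in> A x2" | "x1 = y" "u1 = w" "u2 \<in> A x2" | "u1 \<in> A x1" "x2 = y" "u2 = w"
      | "x1 = y" "u1 = w" "x2 = y" "u2 = w"
      using h1 h2 by (auto simp: B_def split: if_splits)
    then show "0 \<le> inner (x1 - x2) (u1 - u2)"
    proof cases
      case 1 then show ?thesis using mon by (auto simp: monotone_op_def)
    next
      case 2 then show ?thesis using key by auto
    next
      case 3
      have "inner (x1 - x2) (u1 - u2) = inner (y - x1) (w - u1)"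
        using 3 by (simp add: inner_diff_left inner_diff_right algebra_simps)
      then show ?thesis using key[OF 3(1)] by simp
    next
      case 4 then show ?thesis by simp
    qed
  qed
  moreover have "\<forall>x. A x \<subseteq> B x" by (auto simp: B_def)
  ultimately have "B = A" using mm by (simp add: maximal_monotone_def)
  hence "w \<in> A y" by (metis B_def insertI1)
  moreover have "z = y + \<gamma> *\<^sub>R w" using g by (simp add: w_def)
  ultimately show ?thesis by blast
qed

lemma resolvent_unique:
  fixes A :: "'a::real_inner \<Rightarrow> 'a set"
  assumes mon: "monotone_op A" and g: "\<gamma> > 0"
    and "u1 \<in> A y1" "x = y1 + \<gamma> *\<^sub>R u1" and "u2 \<in> A y2" "x = y2 + \<gamma> *\<^sub>R u2"
  shows "y1 = y2"
proof -
  have d: "y1 - y2 = \<gamma> *\<^sub>R (u2 - u1)" using assms(4,6) by (simp add: algebra_simps)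
  have "0 \<le> inner (y1 - y2) (u1 - u2)" using mon assms(3,5) by (auto simp: monotone_op_def)
  also have "\<dots> = - \<gamma> * inner (u1 - u2) (u1 - u2)" unfolding d
    by (simp add: inner_diff_left inner_diff_right inner_commute algebra_simps)
  finally have "inner (u1 - u2) (u1 - u2) \<le> 0" using g by (simp add: mult_le_0_iff)
  hence "inner (u1 - u2) (u1 - u2) = 0" using inner_ge_zero[of "u1 - u2"] by linarith
  hence "u1 = u2" by simp
  thus ?thesis using d by simp
qed

lemma resolvent_prop:
  fixes A :: "'a::{real_inner,complete_space} \<Rightarrow> 'a set"
  assumes mm: "maximal_monotone A" and g: "\<gamma> > 0"
  shows "\<exists>u\<in>A (resolvent \<gamma> A x). x = resolvent \<gamma> A x + \<gamma> *\<^sub>R u"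
proof -
  have mon: "monotone_op A" using mm by (simp add: maximal_monotone_def)
  have "\<exists>!y. \<exists>u\<in>A y. x = y + \<gamma> *\<^sub>R u"
    using minty[OF mm g, of x] resolvent_unique[OF mon g] by blast
  then show ?thesis unfolding resolvent_def by (rule theI')
qed

lemma step_ineq:
  fixes A :: "'a::real_inner \<Rightarrow> 'a set"
  assumes mon: "monotone_op A" and g: "\<gamma> > 0"
    and "u \<in> A j" "x = j + \<gamma> *\<^sub>R u" and "0 \<in> A p"
  shows "(norm (j - p))\<^sup>2 + \<gamma>\<^sup>2 * (norm u)\<^sup>2 \<le> (norm (x - p))\<^sup>2"
proof -
  have "0 \<le> inner (j - p) (u - 0)" using mon assms(3,5) unfolding monotone_op_def by blast
  hence i: "0 \<le> inner (j - p) u" by simp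
  have "x - p = (j - p) + \<gamma> *\<^sub>R u" using assms(4) by simp
  hence "(norm (x - p))\<^sup>2 = (norm ((j - p) + \<gamma> *\<^sub>R u))\<^sup>2" by (simp only:)
  also have "\<dots> = (norm (j - p))\<^sup>2 + 2 * \<gamma> * inner (j - p) u + \<gamma>\<^sup>2 * (norm u)\<^sup>2"
    by (rule norm_add_t)
  finally have "(norm (x - p))\<^sup>2 = (norm (j - p))\<^sup>2 + 2 * \<gamma> * inner (j - p) u + \<gamma>\<^sup>2 * (norm u)\<^sup>2" .
  thus ?thesis using i g by simp
qed

lemma step_dec:
  fixes A :: "'a::real_inner \<Rightarrow> 'a set"
  assumes mon: "monotone_op A" and g: "\<gamma> > 0"
    and "u \<in> A j" "x = j + \<gamma> *\<^sub>R u" and "v \<in> A x"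
  shows "norm u \<le> norm v"
proof -
  have "0 \<le> inner (x - j) (v - u)" using mon assms(3,5) unfolding monotone_op_def by blast
  hence "0 \<le> \<gamma> * inner u (v - u)" using assms(4) by simp
  hence "0 \<le> inner u (v - u)" using g by (simp add: zero_le_mult_iff)
  hence "inner u u \<le> inner u v" by (simp add: inner_diff_right)
  also have "\<dots> \<le> norm u * norm v" by (rule Cauchy_Schwarz_ineq2[THEN abs_le_D1])
  finally have "norm u * norm u \<le> norm u * norm v" by (simp add: power2_eq_square[symmetric] power2_norm_eq_inner[symmetric])
  show ?thesis
  proof (cases "norm u = 0")
    case True thus ?thesis by simp
  next
    case False hence "0 < norm u" by simp
    thus ?thesis using \<open>norm u * norm u \<le> norm u * norm v\<close> by (simp add: mult_le_cancel_left_pos)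
  qed
qed



theorem theorem8p4:
  fixes A :: "'a::{real_inner, complete_space} \<Rightarrow> 'a set"
    and \<gamma> :: "nat \<Rightarrow> real" and \<theta> :: "nat \<Rightarrow> nat"
    and x :: "nat \<Rightarrow> 'a" and b :: real and p :: 'a
  assumes "maximal_monotone A"
    and "zer A \<noteq> {}"
    and "\<And>n. \<gamma> n > 0"
    and "\<not> summable (\<lambda>n. (\<gamma> n)\<^sup>2)"
    and "rate_of_divergence \<gamma> \<theta>"
    and "\<And>n. x (Suc n) = resolvent (\<gamma> n) A (x n)"
    and "b > 0" and "p \<in> zer A" and "norm (x 0 - p) \<le> b"
  shows "\<forall>k. \<exists>N \<le> Phi k (m_seq \<gamma> k) \<theta> b. x N \<in> AF \<gamma> A k"
proof (intro allI)
  fix k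
  have mon: "monotone_op A" using assms(1) by (simp add: maximal_monotone_def)
  define J where "J = (\<lambda>i z. resolvent (\<gamma> i) A z)"
  have Jp: "\<exists>u\<in>A (J i z). z = J i z + \<gamma> i *\<^sub>R u" for i z
    unfolding J_def by (rule resolvent_prop[OF assms(1) assms(3)])
  have p0: "0 \<in> A p" using assms(8) by (simp add: zer_def)
  have "\<forall>n. \<exists>u. u \<in> A (x (Suc n)) \<and> x n = x (Suc n) + \<gamma> n *\<^sub>R u"
    using Jp assms(6) unfolding J_def by metis
  then obtain ys where ys: "\<forall>n. ys n \<in> A (x (Suc n)) \<and> x n = x (Suc n) + \<gamma> n *\<^sub>R ys n" by metis
  have fne: "norm (z - J i z) \<le> norm (z - p)" for i z
  proof -
    obtain u where u: "u \<in> A (J i z)" "z = J i z + \<gamma> i *\<^sub>R u" using Jp by blast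
    have "(norm (J i z - p))\<^sup>2 + (\<gamma> i)\<^sup>2 * (norm u)\<^sup>2 \<le> (norm (z - p))\<^sup>2"
      by (rule step_ineq[OF mon assms(3) u p0])
    moreover have "norm (z - J i z) = \<gamma> i * norm u" using u(2) assms(3)[of i]
      by (metis add_diff_cancel_left' norm_scaleR abs_of_pos)
    ultimately have "(norm (z - J i z))\<^sup>2 \<le> (norm (z - p))\<^sup>2"
      by (simp add: power_mult_distrib) (smt (verit) zero_le_power2)
    thus ?thesis by (rule power2_le_imp_le) simp
  qed
  have fres: "norm (z - J i z) \<le> \<gamma> i * norm v" if "v \<in> A z" for i z v
  proof -
    obtain u where u: "u \<in> A (J i z)" "z = J i z + \<gamma> i *\<^sub>R u" using Jp by blast
    have "norm u \<le> norm v" by (rule step_dec[OF mon assms(3) u that])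
    moreover have "norm (z - J i z) = \<gamma> i * norm u" using u(2) assms(3)[of i]
      by (metis add_diff_cancel_left' norm_scaleR abs_of_pos)
    ultimately show ?thesis using assms(3)[of i] by (simp add: mult_left_mono)
  qed
  have ydec: "norm (ys (Suc n)) \<le> norm (ys n)" for n
  proof -
    have "ys (Suc n) \<in> A (x (Suc (Suc n)))" "x (Suc n) = x (Suc (Suc n)) + \<gamma> (Suc n) *\<^sub>R ys (Suc n)"
      "ys n \<in> A (x (Suc n))" using ys by blast+
    from step_dec[OF mon assms(3) this] show ?thesis .
  qed
  have ydec2: "norm (ys N) \<le> norm (ys n)" if "n \<le> N" for n N
    using that
  proof (induction N rule: dec_induct)
    case base then show ?case by simp
  next
    case (step m) then show ?case using ydec[of m] by linarith
  qed
  have sumineq: "(\<Sum>i\<le>N. (\<gamma> i)\<^sup>2 * (norm (ys i))\<^sup>2) + (norm (x (Suc N) - p))\<^sup>2 \<le> (norm (x 0 - p))\<^sup>2" for N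
  proof (induction N)
    case 0
    have "ys 0 \<in> A (x (Suc 0))" "x 0 = x (Suc 0) + \<gamma> 0 *\<^sub>R ys 0" using ys by blast+
    from step_ineq[OF mon assms(3) this p0] show ?case by (simp add: add.commute)
  next
    case (Suc N)
    have "(norm (x (Suc (Suc N)) - p))\<^sup>2 + (\<gamma> (Suc N))\<^sup>2 * (norm (ys (Suc N)))\<^sup>2 \<le> (norm (x (Suc N) - p))\<^sup>2"
    proof -
      have "ys (Suc N) \<in> A (x (Suc (Suc N)))" "x (Suc N) = x (Suc (Suc N)) + \<gamma> (Suc N) *\<^sub>R ys (Suc N)" using ys by blast+
      from step_ineq[OF mon assms(3) this p0] show ?thesis .
    qed
    then show ?case using Suc.IH by simp
  qed
  have b2: "(norm (x 0 - p))\<^sup>2 \<le> b\<^sup>2" using assms(9) by (intro power_mono) auto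
  have Tb: "(norm (ys N))\<^sup>2 * (\<Sum>i\<le>N. (\<gamma> i)\<^sup>2) \<le> b\<^sup>2" for N
  proof -
    have "(norm (ys N))\<^sup>2 * (\<Sum>i\<le>N. (\<gamma> i)\<^sup>2) = (\<Sum>i\<le>N. (\<gamma> i)\<^sup>2 * (norm (ys N))\<^sup>2)"
      by (simp add: sum_distrib_left mult.commute)
    also have "\<dots> \<le> (\<Sum>i\<le>N. (\<gamma> i)\<^sup>2 * (norm (ys i))\<^sup>2)"
      by (intro sum_mono mult_left_mono power_mono ydec2) auto
    also have "\<dots> \<le> b\<^sup>2" using sumineq[of N] b2 zero_le_power2[of "norm (x (Suc N) - p)"] by linarith
    finally show ?thesis .
  qed
  define m where "m = m_seq \<gamma> k"
  have mge: "\<gamma> i \<le> m" if "i \<le> k" for i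
    unfolding m_def m_seq_def using that by (intro Max_ge) auto
  have m0: "0 < m" using mge[of 0] assms(3)[of 0] by simp
  define M where "M = M_seq m k"
  define c where "c = nat \<lceil>b\<^sup>2 * (real M + 1)\<^sup>2\<rceil>"
  have Phi_eq: "Phi k m \<theta> b = \<theta> c * c - 1" by (simp add: Phi_def c_def M_def Let_def)
  have AFI: "z \<in> AF \<gamma> A k" if "\<forall>i\<le>k. norm (z - J i z) \<le> 1 / (real k + 1)" for z
    using that unfolding AF_def J_def by auto
  show "\<exists>N \<le> Phi k (m_seq \<gamma> k) \<theta> b. x N \<in> AF \<gamma> A k"
  proof (cases "b \<le> 1 / (real k + 1)")
    case True
    have "x 0 \<in> AF \<gamma> A k"
      using fne assms(9) True by (intro AFI) (meson order_trans)
    then show ?thesis by blast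
  next
    case False
    hence bk: "1 < b * (real k + 1)" by (simp add: field_simps)
    define X where "X = (real k + 1) * (2 + m)"
    have X0: "0 < X" using m0 by (simp add: X_def)
    have M1: "X \<le> real M + 1"
    proof -
      have c1: "1 \<le> \<lceil>X\<rceil>" using X0 by simp
      have "M = nat \<lceil>X\<rceil> - 1" by (simp add: M_def M_seq_def X_def)
      moreover have n1: "1 \<le> nat \<lceil>X\<rceil>" using c1 by arith
      ultimately have "real M + 1 = real (nat \<lceil>X\<rceil>)" by (simp add: of_nat_diff)
      also have "\<dots> = of_int \<lceil>X\<rceil>" using c1 by simp
      finally show ?thesis by linarith
    qed
    have cge: "b\<^sup>2 * (real M + 1)\<^sup>2 \<le> real c" unfolding c_def by (rule real_nat_ceiling_ge)
    have bM: "2 + m < b * (real M + 1)"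
    proof -
      have "2 + m < b * (real k + 1) * (2 + m)" using bk m0 by simp
      also have "\<dots> = b * X" by (simp add: X_def)
      also have "\<dots> \<le> b * (real M + 1)" using M1 assms(7) by simp
      finally show ?thesis .
    qed
    have c2: "(2 + m)\<^sup>2 < real c"
    proof -
      have "(2 + m)\<^sup>2 < (b * (real M + 1))\<^sup>2" using bM m0 by (intro power_strict_mono) auto
      thus ?thesis using cge by (simp add: power_mult_distrib)
    qed
    have "4 < real c"
    proof -
      have "4 < (2 + m)\<^sup>2" using m0 by (simp add: power2_eq_square algebra_simps) (smt (verit) mult_pos_pos)
      thus ?thesis using c2 by linarith
    qed
    hence c5: "5 \<le> c" by simp
    define t where "t = \<theta> c"
    have tsum: "real c \<le> (\<Sum>i\<le>t. (\<gamma> i)\<^sup>2)" using assms(5) by (simp add: rate_of_divergence_def t_def)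
    have t1: "1 \<le> t"
    proof (rule ccontr)
      assume "\<not> 1 \<le> t"
      hence "t = 0" by simp
      hence "real c \<le> (\<gamma> 0)\<^sup>2" using tsum by simp
      moreover have "(\<gamma> 0)\<^sup>2 \<le> m\<^sup>2" using mge[of 0] assms(3)[of 0] by (intro power_mono) auto
      moreover have "m\<^sup>2 < (2 + m)\<^sup>2" using m0 by (intro power_strict_mono) auto
      ultimately show False using c2 by linarith
    qed
    have Nle: "Suc t \<le> t * c - 1"
    proof -
      have "t * 5 \<le> t * c" using c5 by (rule mult_le_mono2)
      thus ?thesis using t1 by linarith
    qed
    define Y where "Y = norm (ys t)"
    have Y0: "0 \<le> Y" by (simp add: Y_def)
    have Yb: "Y\<^sup>2 * real c \<le> b\<^sup>2"
    proof -
      have "Y\<^sup>2 * real c \<le> Y\<^sup>2 * (\<Sum>i\<le>t. (\<gamma> i)\<^sup>2)" using tsum by (intro mult_left_mono) auto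
      thus ?thesis using Tb[of t] by (simp add: Y_def)
    qed
    have Y1: "Y * (real M + 1) \<le> 1"
    proof -
      have "(Y * (real M + 1))\<^sup>2 * b\<^sup>2 = Y\<^sup>2 * (b\<^sup>2 * (real M + 1)\<^sup>2)" by (simp add: power_mult_distrib)
      also have "\<dots> \<le> Y\<^sup>2 * real c" using cge by (intro mult_left_mono) auto
      also have "\<dots> \<le> 1 * b\<^sup>2" using Yb by simp
      finally have "(Y * (real M + 1))\<^sup>2 \<le> 1\<^sup>2" using assms(7) by (simp add: mult_le_cancel_right)
      thus ?thesis by (rule power2_le_imp_le) simp
    qed
    have Y2: "m * Y \<le> 1 / (real k + 1)"
    proof -
      have "Y * X \<le> Y * (real M + 1)" using M1 Y0 by (intro mult_left_mono)
      hence "Y * X \<le> 1" using Y1 by linarith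
      moreover have "m * Y * (real k + 1) \<le> Y * X" unfolding X_def using Y0 m0
        by (simp add: algebra_simps mult_left_mono)
      ultimately have "m * Y * (real k + 1) \<le> 1" by linarith
      thus ?thesis by (simp add: field_simps)
    qed
    have "x (Suc t) \<in> AF \<gamma> A k"
    proof (intro AFI allI impI)
      fix i assume ik: "i \<le> k"
      have "norm (x (Suc t) - J i (x (Suc t))) \<le> \<gamma> i * Y" unfolding Y_def using ys by (intro fres) blast
      also have "\<dots> \<le> m * Y" using mge[OF ik] Y0 by (intro mult_right_mono)
      also have "\<dots> \<le> 1 / (real k + 1)" by (rule Y2)
      finally show "norm (x (Suc t) - J i (x (Suc t))) \<le> 1 / (real k + 1)" .
    qed
    moreover have "Suc t \<le> Phi k (m_seq \<gamma> k) \<theta> b" using Nle Phi_eq by (simp add: m_def t_def)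
    ultimately show ?thesis by blast
  qed
qed


end
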